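(* For every $n\in\mathbb{N}$: (1) there exist a modal space $\boldsymbol{X}$, a clean map $\boldsymbol{f}$ on $\boldsymbol{X}$ induced by a finite, static multi-pointed action model that is not Boolean, and a point $\boldsymbol{x}\in\boldsymbol{X}$ whose orbit $\mathcal{O}_{\boldsymbol{f}}(\boldsymbol{x})$ is periodic with period $n$; and (2) the same holds with a clean map induced by a finite, Boolean multi-pointed action model that is not static.
   Context: Setting: atom set $\Phi$, finite agent set $I$, modal language $\mathcal{L}$ ($\varphi::=\top\mid p\mid\neg\varphi\mid\varphi\wedge\varphi\mid\square_i\varphi$), logic $\Lambda$ a normal modal logic extending $K$. For a set $X$ of pointed Kripke models (countable nonempty state sets, standard semantics), the $\boldsymbol{\mathcal{L}}_\Lambda$ modal space is $\boldsymbol{X}=\{\boldsymbol{x}:x\in X\}$, $\boldsymbol{x}=\{y\in X:y,x\text{ satisfy the same formulas}\}$. Clean map: induced via product update $x\mapsto x\otimes\Sigma\Gamma$ by a multi-pointed action model $\Sigma\Gamma=(\llbracket\Sigma\rrbracket,\mathsf{R},pre,post,\Gamma)$ (countable action set, relations $\mathsf{R}_i$, preconditions in $\mathcal{L}$, postconditions $\top$ or conjunctions of literals over $\Phi$, designated set $\emptyset\ne\Gamma\subseteq\llbracket\Sigma\rrbracket$) that is precondition finite, exhaustive, deterministic and closing over $X$ (every $x\in X$ satisfies $pre(\sigma)$ for exactly one $\sigma\in\Gamma$, finitely many preconditions up to $\Lambda$-equivalence, and $x\otimes\Sigma\Gamma\in X$). Product update: states $(s,\sigma)$ with $Ms\vDash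 pre(\sigma)$, relations componentwise, $p$ true at $(s,\sigma)$ iff $post(\sigma)\vDash p$, or $s\in\llbracket p\rrbracket$ and $post(\sigma)\nvDash\neg p$; designated state $(s,\sigma)$ for the applicable $\sigma\in\Gamma$. $\boldsymbol{f}(\boldsymbol{x})$ is the class of $x\otimes\Sigma\Gamma$. $\Sigma\Gamma$ is finite if $\llbracket\Sigma\rrbracket$ is finite, Boolean if every precondition is modality-free, static if every postcondition is $\top$. Orbit $\mathcal{O}_{\boldsymbol{f}}(\boldsymbol{x})=\{\boldsymbol{f}^m(\boldsymbol{x}):m\in\mathbb{N}_0\}$ is periodic if $\boldsymbol{f}^{m+k}(\boldsymbol{x})=\boldsymbol{f}^m(\boldsymbol{x})$ for some $m\ge0,k>0$; the least such $k$ is its period. *)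

theory Defs
  imports Main "HOL-Library.Nat_Bijection"
begin

datatype ('a, 'i) form =
    Top
  | Atom 'a
  | Neg "('a, 'i) form"
  | Conj "('a, 'i) form" "('a, 'i) form"
  | Box 'i "('a, 'i) form"

definition Imp :: "('a, 'i) form \<Rightarrow> ('a, 'i) form \<Rightarrow> ('a, 'i) form" where
  "Imp \<phi> \<psi> = Neg (Conj \<phi> (Neg \<psi>))"

definition Iff :: "('a, 'i) form \<Rightarrow> ('a, 'i) form \<Rightarrow> ('a, 'i) form" where
  "Iff \<phi> \<psi> = Conj (Imp \<phi> \<psi>) (Imp \<psi> \<phi>)"

fun modality_free :: "('a, 'i) form \<Rightarrow> bool" where
  "modality_free Top = True"
| "modality_free (Atom p) = True"
| "modality_free (Neg \<phi>) = modality_free \<phi>"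
| "modality_free (Conj \<phi> \<psi>) = (modality_free \<phi> \<and> modality_free \<psi>)"
| "modality_free (Box i \<phi>) = False"

text \<open>Propositional evaluation, treating atoms and boxed formulas as propositional letters.\<close>
fun peval :: "(('a, 'i) form \<Rightarrow> bool) \<Rightarrow> ('a, 'i) form \<Rightarrow> bool" where
  "peval v Top = True"
| "peval v (Atom p) = v (Atom p)"
| "peval v (Neg \<phi>) = (\<not> peval v \<phi>)"
| "peval v (Conj \<phi> \<psi>) = (peval v \<phi> \<and> peval v \<psi>)"
| "peval v (Box i \<phi>) = v (Box i \<phi>)"

definition taut :: "('a, 'i) form \<Rightarrow> bool" where
  "taut \<phi> = (\<forall>v. peval v \<phi>)"

fun subst :: "('a \<Rightarrow> ('a, 'i) form) \<Rightarrow> ('a, 'i) form \<Rightarrow> ('a, 'i) form" where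
  "subst s Top = Top"
| "subst s (Atom p) = s p"
| "subst s (Neg \<phi>) = Neg (subst s \<phi>)"
| "subst s (Conj \<phi> \<psi>) = Conj (subst s \<phi>) (subst s \<psi>)"
| "subst s (Box i \<phi>) = Box i (subst s \<phi>)"

definition normal_logic :: "('a, 'i) form set \<Rightarrow> bool" where
  "normal_logic \<Lambda> \<longleftrightarrow>
     (\<forall>\<phi>. taut \<phi> \<longrightarrow> \<phi> \<in> \<Lambda>)
   \<and> (\<forall>i \<phi> \<psi>. Imp (Box i (Imp \<phi> \<psi>)) (Imp (Box i \<phi>) (Box i \<psi>)) \<in> \<Lambda>)
   \<and> (\<forall>\<phi> \<psi>. \<phi> \<in> \<Lambda> \<longrightarrow> Imp \<phi> \<psi> \<in> \<Lambda> \<longrightarrow> \<psi> \<in> \<Lambda>)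
   \<and> (\<forall>i \<phi>. \<phi> \<in> \<Lambda> \<longrightarrow> Box i \<phi> \<in> \<Lambda>)
   \<and> (\<forall>s \<phi>. \<phi> \<in> \<Lambda> \<longrightarrow> subst s \<phi> \<in> \<Lambda>)"

text \<open>States are natural numbers (so every state set is countable).\<close>
record ('a, 'i) kmodel =
  W :: "nat set"
  Rel :: "'i \<Rightarrow> nat \<Rightarrow> nat \<Rightarrow> bool"
  Val :: "'a \<Rightarrow> nat set"

type_synonym ('a, 'i) pointed = "('a, 'i) kmodel \<times> nat"

fun sat :: "('a, 'i) kmodel \<Rightarrow> nat \<Rightarrow> ('a, 'i) form \<Rightarrow> bool" where
  "sat M w Top = True"
| "sat M w (Atom p) = (w \<in> Val M p)"
| "sat M w (Neg \<phi>) = (\<not> sat M w \<phi>)"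
| "sat M w (Conj \<phi> \<psi>) = (sat M w \<phi> \<and> sat M w \<psi>)"
| "sat M w (Box i \<phi>) = (\<forall>v \<in> W M. Rel M i w v \<longrightarrow> sat M v \<phi>)"

definition psat :: "('a, 'i) pointed \<Rightarrow> ('a, 'i) form \<Rightarrow> bool" where
  "psat x \<phi> = sat (fst x) (snd x) \<phi>"

definition wf_pointed :: "('a, 'i) pointed \<Rightarrow> bool" where
  "wf_pointed x \<longleftrightarrow> W (fst x) \<noteq> {} \<and> snd x \<in> W (fst x)
     \<and> (\<forall>i u v. Rel (fst x) i u v \<longrightarrow> u \<in> W (fst x) \<and> v \<in> W (fst x))
     \<and> (\<forall>p. Val (fst x) p \<subseteq> W (fst x))"

definition mequiv :: "('a, 'i) pointed \<Rightarrow> ('a, 'i) pointed \<Rightarrow> bool" where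
  "mequiv x y \<longleftrightarrow> (\<forall>\<phi>. psat x \<phi> = psat y \<phi>)"

definition mclass :: "('a, 'i) pointed set \<Rightarrow> ('a, 'i) pointed \<Rightarrow> ('a, 'i) pointed set" where
  "mclass X x = {y \<in> X. mequiv y x}"

definition modal_space :: "('a, 'i) pointed set \<Rightarrow> ('a, 'i) pointed set set" where
  "modal_space X = mclass X ` X"

text \<open>Actions are natural numbers (countable action set).\<close>
record ('a, 'i) amodel =
  Act :: "nat set"
  ARel :: "'i \<Rightarrow> nat \<Rightarrow> nat \<Rightarrow> bool"
  pre :: "nat \<Rightarrow> ('a, 'i) form"
  post :: "nat \<Rightarrow> ('a, 'i) form"
  Des :: "nat set"

fun is_literal :: "('a, 'i) form \<Rightarrow> bool" where
  "is_literal (Atom p) = True"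
| "is_literal (Neg (Atom p)) = True"
| "is_literal _ = False"

fun conj_literals :: "('a, 'i) form \<Rightarrow> bool" where
  "conj_literals (Conj \<phi> \<psi>) = (conj_literals \<phi> \<and> conj_literals \<psi>)"
| "conj_literals \<phi> = is_literal \<phi>"

definition valid_post :: "('a, 'i) form \<Rightarrow> bool" where
  "valid_post \<phi> \<longleftrightarrow> \<phi> = Top \<or> conj_literals \<phi>"

definition wf_amodel :: "('a, 'i) amodel \<Rightarrow> bool" where
  "wf_amodel S \<longleftrightarrow> Des S \<noteq> {} \<and> Des S \<subseteq> Act S
     \<and> (\<forall>i \<sigma> \<tau>. ARel S i \<sigma> \<tau> \<longrightarrow> \<sigma> \<in> Act S \<and> \<tau> \<in> Act S)
     \<and> (\<forall>\<sigma> \<in> Act S. valid_post (post S \<sigma>))"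

text \<open>Semantic consequence (used for postconditions, which are modality-free).\<close>
definition entails :: "('a, 'i) form \<Rightarrow> ('a, 'i) form \<Rightarrow> bool" where
  "entails \<phi> \<psi> \<longleftrightarrow> (\<forall>(M :: ('a, 'i) kmodel) w. sat M w \<phi> \<longrightarrow> sat M w \<psi>)"

text \<open>Product states (s, sigma) are encoded as natural numbers via prod_encode.\<close>
definition upd_W :: "('a, 'i) kmodel \<Rightarrow> ('a, 'i) amodel \<Rightarrow> nat set" where
  "upd_W M S = {prod_encode (s, \<sigma>) | s \<sigma>. s \<in> W M \<and> \<sigma> \<in> Act S \<and> sat M s (pre S \<sigma>)}"

definition upd_model :: "('a, 'i) kmodel \<Rightarrow> ('a, 'i) amodel \<Rightarrow> ('a, 'i) kmodel" where
  "upd_model M S =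
    \<lparr> W = upd_W M S,
      Rel = (\<lambda>i u v. u \<in> upd_W M S \<and> v \<in> upd_W M S
               \<and> Rel M i (fst (prod_decode u)) (fst (prod_decode v))
               \<and> ARel S i (snd (prod_decode u)) (snd (prod_decode v))),
      Val = (\<lambda>p. {u \<in> upd_W M S.
               entails (post S (snd (prod_decode u))) (Atom p)
             \<or> (fst (prod_decode u) \<in> Val M p
                \<and> \<not> entails (post S (snd (prod_decode u))) (Neg (Atom p)))}) \<rparr>"

definition des_act :: "('a, 'i) amodel \<Rightarrow> ('a, 'i) pointed \<Rightarrow> nat" where
  "des_act S x = (THE \<sigma>. \<sigma> \<in> Des S \<and> psat x (pre S \<sigma>))"

definition upd :: "('a, 'i) pointed \<Rightarrow> ('a, 'i) amodel \<Rightarrow> ('a, 'i) pointed" where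
  "upd x S = (upd_model (fst x) S, prod_encode (snd x, des_act S x))"

definition precondition_finite :: "('a, 'i) form set \<Rightarrow> ('a, 'i) amodel \<Rightarrow> bool" where
  "precondition_finite \<Lambda> S \<longleftrightarrow>
     (\<exists>F. finite F \<and> (\<forall>\<sigma> \<in> Act S. \<exists>\<psi> \<in> F. Iff (pre S \<sigma>) \<psi> \<in> \<Lambda>))"

definition exhaustive_deterministic :: "('a, 'i) amodel \<Rightarrow> ('a, 'i) pointed set \<Rightarrow> bool" where
  "exhaustive_deterministic S X \<longleftrightarrow> (\<forall>x \<in> X. \<exists>!\<sigma>. \<sigma> \<in> Des S \<and> psat x (pre S \<sigma>))"

definition closing :: "('a, 'i) amodel \<Rightarrow> ('a, 'i) pointed set \<Rightarrow> bool" where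
  "closing S X \<longleftrightarrow> (\<forall>x \<in> X. upd x S \<in> X)"

definition clean_amodel :: "('a, 'i) form set \<Rightarrow> ('a, 'i) pointed set \<Rightarrow> ('a, 'i) amodel \<Rightarrow> bool" where
  "clean_amodel \<Lambda> X S \<longleftrightarrow> wf_amodel S \<and> precondition_finite \<Lambda> S
     \<and> exhaustive_deterministic S X \<and> closing S X"

definition induced_map :: "('a, 'i) pointed set \<Rightarrow> ('a, 'i) amodel
    \<Rightarrow> (('a, 'i) pointed set \<Rightarrow> ('a, 'i) pointed set) \<Rightarrow> bool" where
  "induced_map X S f \<longleftrightarrow> (\<forall>x \<in> X. f (mclass X x) = mclass X (upd x S))"

definition finite_am :: "('a, 'i) amodel \<Rightarrow> bool" where
  "finite_am S \<longleftrightarrow> finite (Act S)"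

definition boolean_am :: "('a, 'i) amodel \<Rightarrow> bool" where
  "boolean_am S \<longleftrightarrow> (\<forall>\<sigma> \<in> Act S. modality_free (pre S \<sigma>))"

definition static_am :: "('a, 'i) amodel \<Rightarrow> bool" where
  "static_am S \<longleftrightarrow> (\<forall>\<sigma> \<in> Act S. post S \<sigma> = Top)"

definition periodic_orbit :: "('b \<Rightarrow> 'b) \<Rightarrow> 'b \<Rightarrow> bool" where
  "periodic_orbit f x \<longleftrightarrow> (\<exists>m k. k > 0 \<and> (f ^^ (m + k)) x = (f ^^ m) x)"

definition orbit_period :: "('b \<Rightarrow> 'b) \<Rightarrow> 'b \<Rightarrow> nat" where
  "orbit_period f x = (LEAST k. k > 0 \<and> (\<exists>m. (f ^^ (m + k)) x = (f ^^ m) x))"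

end

theory Submission
  imports Defs "HOL-Library.Countable"
begin


definition bisim :: "('a, 'i) kmodel \<Rightarrow> ('a, 'i) kmodel \<Rightarrow> (nat \<Rightarrow> nat \<Rightarrow> bool) \<Rightarrow> bool" where
  "bisim M M' Z \<longleftrightarrow> (\<forall>u v. Z u v \<longrightarrow> u \<in> W M \<and> v \<in> W M' \<and> (\<forall>q. (u \<in> Val M q) = (v \<in> Val M' q))
     \<and> (\<forall>i u'. u' \<in> W M \<and> Rel M i u u' \<longrightarrow> (\<exists>v'. v' \<in> W M' \<and> Rel M' i v v' \<and> Z u' v'))
     \<and> (\<forall>i v'. v' \<in> W M' \<and> Rel M' i v v' \<longrightarrow> (\<exists>u'. u' \<in> W M \<and> Rel M i u u' \<and> Z u' v')))"

definition bis :: "('a, 'i) pointed \<Rightarrow> ('a, 'i) pointed \<Rightarrow> bool" where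
  "bis x y \<longleftrightarrow> (\<exists>Z. bisim (fst x) (fst y) Z \<and> Z (snd x) (snd y))"

lemma bisim_sat:
  assumes "bisim M M' Z" "Z u v"
  shows "sat M u \<phi> = sat M' v \<phi>"
  using assms(2)
proof (induction \<phi> arbitrary: u v)
  case (Atom p)
  then show ?case using assms(1) unfolding bisim_def by auto
next
  case (Box i \<phi>)
  have B: "bisim M M' Z" by fact
  show ?case
  proof
    assume L: "sat M u (Box i \<phi>)"
    show "sat M' v (Box i \<phi>)"
    proof (simp, intro ballI impI)
      fix v' assume "v' \<in> W M'" "Rel M' i v v'"
      then obtain u' where "u' \<in> W M" "Rel M i u u'" "Z u' v'"
        using B Box.prems unfolding bisim_def by blast
      then show "sat M' v' \<phi>" using L Box.IH by auto
    qed
  next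
    assume L: "sat M' v (Box i \<phi>)"
    show "sat M u (Box i \<phi>)"
    proof (simp, intro ballI impI)
      fix u' assume "u' \<in> W M" "Rel M i u u'"
      then obtain v' where "v' \<in> W M'" "Rel M' i v v'" "Z u' v'"
        using B Box.prems unfolding bisim_def by blast
      then show "sat M u' \<phi>" using L Box.IH by auto
    qed
  qed
qed auto

lemma bis_mequiv: "bis x y \<Longrightarrow> mequiv x y"
  unfolding bis_def mequiv_def psat_def using bisim_sat by blast

lemma mequiv_sym: "mequiv x y \<Longrightarrow> mequiv y x"
  unfolding mequiv_def by auto

lemma mequiv_trans: "mequiv x y \<Longrightarrow> mequiv y z \<Longrightarrow> mequiv x z"
  unfolding mequiv_def by auto

lemma bis_refl: "snd x \<in> W (fst x) \<Longrightarrow> bis x x"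
  unfolding bis_def
  by (rule exI[of _ "\<lambda>u v. u = v \<and> u \<in> W (fst x)"]) (auto simp: bisim_def)

lemma bis_trans:
  assumes "bis x y" "bis y z" shows "bis x z"
proof -
  obtain Z1 where Z1: "bisim (fst x) (fst y) Z1" "Z1 (snd x) (snd y)" using assms(1) bis_def by blast
  obtain Z2 where Z2: "bisim (fst y) (fst z) Z2" "Z2 (snd y) (snd z)" using assms(2) bis_def by blast
  have "bisim (fst x) (fst z) (\<lambda>u w. \<exists>v. Z1 u v \<and> Z2 v w)"
    unfolding bisim_def
  proof (intro allI impI)
    fix u w assume "\<exists>v. Z1 u v \<and> Z2 v w"
    then obtain v where a: "Z1 u v" "Z2 v w" by blast
    have s1: "u \<in> W (fst x)" "v \<in> W (fst y)" "\<forall>q. (u \<in> Val (fst x) q) = (v \<in> Val (fst y) q)"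
      "\<forall>i u'. u' \<in> W (fst x) \<and> Rel (fst x) i u u' \<longrightarrow> (\<exists>v'. v' \<in> W (fst y) \<and> Rel (fst y) i v v' \<and> Z1 u' v')"
      "\<forall>i v'. v' \<in> W (fst y) \<and> Rel (fst y) i v v' \<longrightarrow> (\<exists>u'. u' \<in> W (fst x) \<and> Rel (fst x) i u u' \<and> Z1 u' v')"
      using Z1(1) a(1) unfolding bisim_def by blast+
    have s2: "w \<in> W (fst z)" "\<forall>q. (v \<in> Val (fst y) q) = (w \<in> Val (fst z) q)"
      "\<forall>i u'. u' \<in> W (fst y) \<and> Rel (fst y) i v u' \<longrightarrow> (\<exists>v'. v' \<in> W (fst z) \<and> Rel (fst z) i w v' \<and> Z2 u' v')"
      "\<forall>i v'. v' \<in> W (fst z) \<and> Rel (fst z) i w v' \<longrightarrow> (\<exists>u'. u' \<in> W (fst y) \<and> Rel (fst y) i v u' \<and> Z2 u' v')"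
      using Z2(1) a(2) unfolding bisim_def by blast+
    show "u \<in> W (fst x) \<and> w \<in> W (fst z) \<and> (\<forall>q. (u \<in> Val (fst x) q) = (w \<in> Val (fst z) q)) \<and>
       (\<forall>i u'. u' \<in> W (fst x) \<and> Rel (fst x) i u u' \<longrightarrow> (\<exists>v'. v' \<in> W (fst z) \<and> Rel (fst z) i w v' \<and> (\<exists>v. Z1 u' v \<and> Z2 v v'))) \<and>
       (\<forall>i v'. v' \<in> W (fst z) \<and> Rel (fst z) i w v' \<longrightarrow> (\<exists>u'. u' \<in> W (fst x) \<and> Rel (fst x) i u u' \<and> (\<exists>v. Z1 u' v \<and> Z2 v v')))"
      using s1 s2 by meson
  qed
  then show ?thesis using Z1(2) Z2(2) unfolding bis_def by blast
qed

lemma des_act_eq: "mequiv x y \<Longrightarrow> des_act S x = des_act S y"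
  unfolding des_act_def mequiv_def by simp

lemma bis_upd:
  assumes b: "bis x y" and d: "des_act S x \<in> Act S" "psat x (pre S (des_act S x))"
  shows "bis (upd x S) (upd y S)"
proof -
  obtain Z where Z: "bisim (fst x) (fst y) Z" "Z (snd x) (snd y)" using b bis_def by blast
  have dy: "des_act S y = des_act S x" using des_act_eq[OF bis_mequiv[OF b]] by simp
  define Z' where "Z' = (\<lambda>u u'. \<exists>s s' \<sigma>. u = prod_encode (s, \<sigma>) \<and> u' = prod_encode (s', \<sigma>) \<and> Z s s'
      \<and> \<sigma> \<in> Act S \<and> sat (fst x) s (pre S \<sigma>))"
  have "bisim (upd_model (fst x) S) (upd_model (fst y) S) Z'"
    unfolding bisim_def
  proof (intro allI impI)
    fix u u' assume "Z' u u'"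
    then obtain s s' \<sigma> where e: "u = prod_encode (s, \<sigma>)" "u' = prod_encode (s', \<sigma>)" "Z s s'"
      "\<sigma> \<in> Act S" "sat (fst x) s (pre S \<sigma>)" unfolding Z'_def by blast
    have zs: "s \<in> W (fst x)" "s' \<in> W (fst y)" "\<forall>q. (s \<in> Val (fst x) q) = (s' \<in> Val (fst y) q)"
      "\<forall>i u'. u' \<in> W (fst x) \<and> Rel (fst x) i s u' \<longrightarrow> (\<exists>v'. v' \<in> W (fst y) \<and> Rel (fst y) i s' v' \<and> Z u' v')"
      "\<forall>i v'. v' \<in> W (fst y) \<and> Rel (fst y) i s' v' \<longrightarrow> (\<exists>u'. u' \<in> W (fst x) \<and> Rel (fst x) i s u' \<and> Z u' v')"
      using Z(1) e(3) unfolding bisim_def by blast+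
    have sat': "\<And>a b \<phi>. Z a b \<Longrightarrow> sat (fst x) a \<phi> = sat (fst y) b \<phi>" using bisim_sat[OF Z(1)] by blast
    have uW: "u \<in> upd_W (fst x) S" using e zs unfolding upd_W_def by blast
    have u'W: "u' \<in> upd_W (fst y) S" using e zs sat'[OF e(3)] unfolding upd_W_def by blast
    have val: "\<forall>q. (u \<in> Val (upd_model (fst x) S) q) = (u' \<in> Val (upd_model (fst y) S) q)"
      using uW u'W e zs(3) by (simp add: upd_model_def)
    have fw: "\<forall>i v. v \<in> W (upd_model (fst x) S) \<and> Rel (upd_model (fst x) S) i u v \<longrightarrow>
       (\<exists>v'. v' \<in> W (upd_model (fst y) S) \<and> Rel (upd_model (fst y) S) i u' v' \<and> Z' v v')"
    proof (intro allI impI)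
      fix i v assume "v \<in> W (upd_model (fst x) S) \<and> Rel (upd_model (fst x) S) i u v"
      then have v: "v \<in> upd_W (fst x) S" "Rel (fst x) i s (fst (prod_decode v))" "ARel S i \<sigma> (snd (prod_decode v))"
        using e by (auto simp: upd_model_def)
      then obtain t \<tau> where tt: "v = prod_encode (t, \<tau>)" "t \<in> W (fst x)" "\<tau> \<in> Act S" "sat (fst x) t (pre S \<tau>)"
        unfolding upd_W_def by blast
      then obtain t' where t': "t' \<in> W (fst y)" "Rel (fst y) i s' t'" "Z t t'" using zs(4) v(2) by auto
      have "prod_encode (t', \<tau>) \<in> upd_W (fst y) S" using t' tt sat'[OF t'(3)] unfolding upd_W_def by blast
      then show "\<exists>v'. v' \<in> W (upd_model (fst y) S) \<and> Rel (upd_model (fst y) S) i u' v' \<and> Z' v v'"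
        using t' tt v u'W e unfolding Z'_def by (intro exI[of _ "prod_encode (t', \<tau>)"]) (auto simp: upd_model_def)
    qed
    have bk: "\<forall>i v'. v' \<in> W (upd_model (fst y) S) \<and> Rel (upd_model (fst y) S) i u' v' \<longrightarrow>
       (\<exists>v. v \<in> W (upd_model (fst x) S) \<and> Rel (upd_model (fst x) S) i u v \<and> Z' v v')"
    proof (intro allI impI)
      fix i v' assume "v' \<in> W (upd_model (fst y) S) \<and> Rel (upd_model (fst y) S) i u' v'"
      then have v: "v' \<in> upd_W (fst y) S" "Rel (fst y) i s' (fst (prod_decode v'))" "ARel S i \<sigma> (snd (prod_decode v'))"
        using e by (auto simp: upd_model_def)
      then obtain t' \<tau> where tt: "v' = prod_encode (t', \<tau>)" "t' \<in> W (fst y)" "\<tau> \<in> Act S" "sat (fst y) t' (pre S \<tau>)"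
        unfolding upd_W_def by blast
      then obtain t where t: "t \<in> W (fst x)" "Rel (fst x) i s t" "Z t t'" using zs(5) v(2) by auto
      have st: "sat (fst x) t (pre S \<tau>)" using sat'[OF t(3)] tt by simp
      have "prod_encode (t, \<tau>) \<in> upd_W (fst x) S" using t tt st unfolding upd_W_def by blast
      then show "\<exists>v. v \<in> W (upd_model (fst x) S) \<and> Rel (upd_model (fst x) S) i u v \<and> Z' v v'"
        using t tt v uW e st unfolding Z'_def by (intro exI[of _ "prod_encode (t, \<tau>)"]) (auto simp: upd_model_def)
    qed
    show "u \<in> W (upd_model (fst x) S) \<and> u' \<in> W (upd_model (fst y) S) \<and>
       (\<forall>q. (u \<in> Val (upd_model (fst x) S) q) = (u' \<in> Val (upd_model (fst y) S) q)) \<and>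
       (\<forall>i u'a. u'a \<in> W (upd_model (fst x) S) \<and> Rel (upd_model (fst x) S) i u u'a \<longrightarrow>
          (\<exists>v'. v' \<in> W (upd_model (fst y) S) \<and> Rel (upd_model (fst y) S) i u' v' \<and> Z' u'a v')) \<and>
       (\<forall>i v'. v' \<in> W (upd_model (fst y) S) \<and> Rel (upd_model (fst y) S) i u' v' \<longrightarrow>
          (\<exists>u'a. u'a \<in> W (upd_model (fst x) S) \<and> Rel (upd_model (fst x) S) i u u'a \<and> Z' u'a v'))"
      using uW u'W val fw bk by (simp add: upd_model_def)
  qed
  moreover have "Z' (snd (upd x S)) (snd (upd y S))"
    unfolding Z'_def upd_def using Z(2) d dy by (auto simp: psat_def)
  ultimately show ?thesis unfolding bis_def upd_def by auto
qed




lemma wf_upd: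
  assumes "wf_pointed x" "des_act S x \<in> Act S" "psat x (pre S (des_act S x))"
  shows "wf_pointed (upd x S)"
proof -
  have "prod_encode (snd x, des_act S x) \<in> upd_W (fst x) S"
    using assms unfolding upd_W_def wf_pointed_def psat_def by blast
  then show ?thesis unfolding wf_pointed_def upd_def by (auto simp: upd_model_def)
qed

lemma des_act_prop:
  assumes "\<exists>!\<sigma>. \<sigma> \<in> Des S \<and> psat x (pre S \<sigma>)"
  shows "des_act S x \<in> Des S \<and> psat x (pre S (des_act S x))"
  unfolding des_act_def using theI'[OF assms] .

lemma taut_Iff: "taut (Iff \<phi> \<phi>)"
  unfolding taut_def Iff_def Imp_def by simp

lemma generic:
  fixes xs :: "nat \<Rightarrow> ('a, 'i) pointed" and S :: "('a, 'i) amodel" and \<Lambda> :: "('a, 'i) form set"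
  assumes n: "n \<ge> 1" and NL: "normal_logic \<Lambda>"
    and wfx: "\<And>c. c < n \<Longrightarrow> wf_pointed (xs c)"
    and wfS: "wf_amodel S" and fin: "finite (Act S)"
    and uniq: "\<And>c. c < n \<Longrightarrow> \<exists>!\<sigma>. \<sigma> \<in> Des S \<and> psat (xs c) (pre S \<sigma>)"
    and step: "\<And>c. c < n \<Longrightarrow> bis (upd (xs c) S) (xs (Suc c mod n))"
    and dist: "\<And>c d. c < n \<Longrightarrow> d < n \<Longrightarrow> mequiv (xs c) (xs d) \<Longrightarrow> c = d"
  shows "\<exists>X f x. (\<forall>y \<in> X. wf_pointed y) \<and> clean_amodel \<Lambda> X S \<and> induced_map X S f
            \<and> x \<in> X \<and> periodic_orbit f (mclass X x) \<and> orbit_period f (mclass X x) = n"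
proof -
  define y where "y m = ((\<lambda>z. upd z S) ^^ m) (xs 0)" for m
  have ySuc: "y (Suc m) = upd (y m) S" for m unfolding y_def by simp
  have DA: "des_act S z \<in> Act S \<and> psat z (pre S (des_act S z))" if "mequiv z (xs c)" "c < n" for z c
  proof -
    have "\<exists>!\<sigma>. \<sigma> \<in> Des S \<and> psat z (pre S \<sigma>)" using uniq[OF that(2)] that(1) unfolding mequiv_def by simp
    from des_act_prop[OF this] show ?thesis using wfS unfolding wf_amodel_def by blast
  qed
  have main: "bis (y m) (xs (m mod n)) \<and> wf_pointed (y m)" for m
  proof (induction m)
    case 0
    have "wf_pointed (xs 0)" using wfx n by simp
    then show ?case unfolding y_def using bis_refl[of "xs 0"] by (simp add: wf_pointed_def)
  next
    case (Suc m)
    let ?c = "m mod n"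
    have c: "?c < n" using n by simp
    have me: "mequiv (y m) (xs ?c)" using Suc bis_mequiv by blast
    have da: "des_act S (y m) \<in> Act S" "psat (y m) (pre S (des_act S (y m)))" using DA[OF me c] by auto
    have "bis (upd (y m) S) (upd (xs ?c) S)" using bis_upd[OF _ da] Suc by blast
    moreover have "bis (upd (xs ?c) S) (xs (Suc ?c mod n))" using step[OF c] .
    moreover have "Suc ?c mod n = Suc m mod n" by (simp add: mod_Suc_eq)
    ultimately have "bis (y (Suc m)) (xs (Suc m mod n))" using bis_trans ySuc by metis
    moreover have "wf_pointed (y (Suc m))" using wf_upd[OF _ da] Suc ySuc by simp
    ultimately show ?case by simp
  qed
  have me: "mequiv (y m) (xs (m mod n))" for m using main bis_mequiv by blast
  define X where "X = range y"
  define K where "K c = {z \<in> X. mequiv z (xs c)}" for c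
  have mc: "mclass X (y m) = K (m mod n)" for m
    unfolding mclass_def K_def using me mequiv_sym mequiv_trans by blast
  have Kinj: "c = d" if "c < n" "d < n" "K c = K d" for c d
  proof -
    have "y c \<in> K c" unfolding K_def X_def using me[of c] that by simp
    then have "mequiv (y c) (xs d)" using that unfolding K_def by simp
    then have "mequiv (xs c) (xs d)" using me[of c] that mequiv_sym mequiv_trans by (metis mod_less)
    then show ?thesis using dist that by blast
  qed
  define f where "f C = (if \<exists>c<n. C = K c then K (Suc (SOME c. c < n \<and> C = K c) mod n) else C)" for C
  have fK: "f (K c) = K (Suc c mod n)" if "c < n" for c
  proof -
    have "(SOME d. d < n \<and> K c = K d) = c"
      using that Kinj by (intro some_equality) auto
    then show ?thesis unfolding f_def using that by auto
  qed
  have fpow: "(f ^^ m) (K 0) = K (m mod n)" for m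
  proof (induction m)
    case 0 then show ?case using n by simp
  next
    case (Suc m)
    have "m mod n < n" using n by simp
    then show ?case using Suc fK[of "m mod n"] by (simp add: mod_Suc_eq)
  qed
  have wfX: "\<forall>z \<in> X. wf_pointed z" unfolding X_def using main by auto
  have clean: "clean_amodel \<Lambda> X S"
    unfolding clean_amodel_def
  proof (intro conjI)
    show "wf_amodel S" by fact
    show "precondition_finite \<Lambda> S" unfolding precondition_finite_def
      using fin taut_Iff NL unfolding normal_logic_def
      by (intro exI[of _ "pre S ` Act S"]) auto
    show "exhaustive_deterministic S X" unfolding exhaustive_deterministic_def X_def
    proof
      fix z assume "z \<in> range y"
      then obtain m where "z = y m" by auto
      then show "\<exists>!\<sigma>. \<sigma> \<in> Des S \<and> psat z (pre S \<sigma>)"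
        using uniq[of "m mod n"] me[of m] n unfolding mequiv_def by simp
    qed
    show "closing S X" unfolding closing_def X_def
    proof
      fix z assume "z \<in> range y"
      then obtain m where "z = y m" by auto
      then have "upd z S = y (Suc m)" using ySuc by simp
      then show "upd z S \<in> range y" by simp
    qed
  qed
  have ind: "induced_map X S f" unfolding induced_map_def X_def
  proof
    fix z assume "z \<in> range y"
    then obtain m where z: "z = y m" by auto
    have "f (mclass X z) = K (Suc (m mod n) mod n)" using z mc fK n by simp
    also have "\<dots> = mclass X (y (Suc m))" using mc by (simp add: mod_Suc_eq)
    finally show "f (mclass (range y) z) = mclass (range y) (upd z S)" using z ySuc X_def by simp
  qed
  have x0: "y 0 \<in> X" unfolding X_def by simp
  have c0: "mclass X (y 0) = K 0" using mc[of 0] by simp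
  have per: "periodic_orbit f (K 0)" unfolding periodic_orbit_def
    using n fpow by (intro exI[of _ 0] exI[of _ n]) simp
  have op: "orbit_period f (K 0) = n" unfolding orbit_period_def
  proof (rule Least_equality)
    show "0 < n \<and> (\<exists>m. (f ^^ (m + n)) (K 0) = (f ^^ m) (K 0))" using n fpow by auto
  next
    fix k assume "0 < k \<and> (\<exists>m. (f ^^ (m + k)) (K 0) = (f ^^ m) (K 0))"
    then obtain m where k: "0 < k" "K ((m + k) mod n) = K (m mod n)" using fpow by auto
    have "(m + k) mod n = m mod n" using Kinj k n by simp
    then have "n dvd (m + k - m)" using mod_eq_dvd_iff_nat[of m "m + k" n] by simp
    then have "n dvd k" by simp
    then show "n \<le> k" using k(1) by (simp add: dvd_imp_le)
  qed
  show ?thesis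
    apply (rule exI[of _ X], rule exI[of _ f], rule exI[of _ "y 0"])
    using wfX clean ind x0 c0 per op by simp
qed




definition mkM :: "'s::countable set \<Rightarrow> ('s \<Rightarrow> 's \<Rightarrow> bool) \<Rightarrow> ('s \<Rightarrow> bool) \<Rightarrow> 'a \<Rightarrow> ('a, 'i) kmodel" where
  "mkM Ws r lab a0 = \<lparr>W = to_nat ` Ws,
     Rel = (\<lambda>i u v. u \<in> to_nat ` Ws \<and> v \<in> to_nat ` Ws \<and> r (from_nat u) (from_nat v)),
     Val = (\<lambda>q. if q = a0 then to_nat ` {s \<in> Ws. lab s} else {})\<rparr>"

definition mkA :: "'b::countable set \<Rightarrow> ('b \<Rightarrow> 'b \<Rightarrow> bool) \<Rightarrow> ('b \<Rightarrow> ('a, 'i) form) \<Rightarrow> ('b \<Rightarrow> ('a, 'i) form) \<Rightarrow> 'b set \<Rightarrow> ('a, 'i) amodel" where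
  "mkA As ar pr ps Ds = \<lparr>Act = to_nat ` As,
     ARel = (\<lambda>i \<sigma> \<tau>. \<sigma> \<in> to_nat ` As \<and> \<tau> \<in> to_nat ` As \<and> ar (from_nat \<sigma>) (from_nat \<tau>)),
     pre = (\<lambda>\<sigma>. pr (from_nat \<sigma>)), post = (\<lambda>\<sigma>. ps (from_nat \<sigma>)), Des = to_nat ` Ds\<rparr>"

definition dia :: "'i \<Rightarrow> ('a, 'i) form \<Rightarrow> ('a, 'i) form" where
  "dia i \<phi> = Neg (Box i (Neg \<phi>))"

lemma tn_in[simp]: "(to_nat s \<in> to_nat ` A) = (s \<in> A)"
  by (auto simp: inj_image_mem_iff)

lemma mkM_simps[simp]:
  "W (mkM Ws r lab a0) = to_nat ` Ws"
  "Rel (mkM Ws r lab a0) i u v = (u \<in> to_nat ` Ws \<and> v \<in> to_nat ` Ws \<and> r (from_nat u) (from_nat v))"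
  "Val (mkM Ws r lab a0) q = (if q = a0 then to_nat ` {s \<in> Ws. lab s} else {})"
  by (simp_all add: mkM_def)

lemma mkA_simps[simp]:
  "Act (mkA As ar pr ps Ds) = to_nat ` As"
  "ARel (mkA As ar pr ps Ds) i \<sigma> \<tau> = (\<sigma> \<in> to_nat ` As \<and> \<tau> \<in> to_nat ` As \<and> ar (from_nat \<sigma>) (from_nat \<tau>))"
  "pre (mkA As ar pr ps Ds) \<sigma> = pr (from_nat \<sigma>)"
  "post (mkA As ar pr ps Ds) \<sigma> = ps (from_nat \<sigma>)"
  "Des (mkA As ar pr ps Ds) = to_nat ` Ds"
  by (simp_all add: mkA_def)

lemma sat_mk_Atom: "s \<in> Ws \<Longrightarrow> sat (mkM Ws r lab a0) (to_nat s) (Atom q) = (q = a0 \<and> lab s)"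
  by auto

lemma sat_mk_Box: "sat (mkM Ws r lab a0) (to_nat s) (Box i \<phi>) =
    (s \<in> Ws \<longrightarrow> (\<forall>t\<in>Ws. r s t \<longrightarrow> sat (mkM Ws r lab a0) (to_nat t) \<phi>))"
  by auto

lemma sat_mk_dia: "sat (mkM Ws r lab a0) (to_nat s) (dia i \<phi>) =
    (s \<in> Ws \<and> (\<exists>t\<in>Ws. r s t \<and> sat (mkM Ws r lab a0) (to_nat t) \<phi>))"
  unfolding dia_def by auto

lemma wf_mk: "s0 \<in> Ws \<Longrightarrow> wf_pointed (mkM Ws r lab a0, to_nat s0)"
  unfolding wf_pointed_def by auto

lemma entails_lemmas:
  "\<not> entails (Top :: ('a, 'i) form) (Atom q)"
  "entails (Atom a :: ('a, 'i) form) (Atom q) = (a = q)"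
  "\<not> entails (Neg (Atom a) :: ('a, 'i) form) (Atom q)"
  "\<not> entails (Top :: ('a, 'i) form) (Neg (Atom q))"
  "\<not> entails (Atom a :: ('a, 'i) form) (Neg (Atom q))"
  "entails (Neg (Atom a) :: ('a, 'i) form) (Neg (Atom q)) = (a = q)"
proof -
  define M0 :: "('a, 'i) kmodel" where "M0 = \<lparr>W = {0}, Rel = (\<lambda>_ _ _. False), Val = (\<lambda>_. {})\<rparr>"
  define M1 :: "('a, 'i) kmodel" where "M1 = \<lparr>W = {0}, Rel = (\<lambda>_ _ _. False), Val = (\<lambda>_. {0})\<rparr>"
  define M2 :: "('a, 'i) kmodel" where "M2 = \<lparr>W = {0}, Rel = (\<lambda>_ _ _. False), Val = (\<lambda>x. if x = a then {0} else {})\<rparr>"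
  define M3 :: "('a, 'i) kmodel" where "M3 = \<lparr>W = {0}, Rel = (\<lambda>_ _ _. False), Val = (\<lambda>x. if x = q then {0} else {})\<rparr>"
  show "\<not> entails (Top :: ('a, 'i) form) (Atom q)"
    unfolding entails_def by (auto intro!: exI[of _ M0] exI[of _ 0] simp: M0_def)
  show "entails (Atom a :: ('a, 'i) form) (Atom q) = (a = q)"
  proof
    assume "entails (Atom a :: ('a, 'i) form) (Atom q)"
    then have "sat M2 0 (Atom a) \<longrightarrow> sat M2 0 (Atom q)" unfolding entails_def by blast
    then show "a = q" by (auto simp: M2_def split: if_splits)
  qed (auto simp: entails_def)
  show "\<not> entails (Neg (Atom a) :: ('a, 'i) form) (Atom q)"
    unfolding entails_def by (auto intro!: exI[of _ M0] exI[of _ 0] simp: M0_def)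
  show "\<not> entails (Top :: ('a, 'i) form) (Neg (Atom q))"
    unfolding entails_def by (auto intro!: exI[of _ M1] exI[of _ 0] simp: M1_def)
  show "\<not> entails (Atom a :: ('a, 'i) form) (Neg (Atom q))"
    unfolding entails_def by (auto intro!: exI[of _ M1] exI[of _ 0] simp: M1_def)
  show "entails (Neg (Atom a) :: ('a, 'i) form) (Neg (Atom q)) = (a = q)"
  proof
    assume "entails (Neg (Atom a) :: ('a, 'i) form) (Neg (Atom q))"
    then have "sat M3 0 (Neg (Atom a)) \<longrightarrow> sat M3 0 (Neg (Atom q))" unfolding entails_def by blast
    then show "a = q" by (auto simp: M3_def split: if_splits)
  qed (auto simp: entails_def)
qed

definition newlab :: "('a, 'i) form \<Rightarrow> 'a \<Rightarrow> bool \<Rightarrow> bool" where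
  "newlab ps a0 b = (if ps = Atom a0 then True else if ps = Neg (Atom a0) then False else b)"

lemma val_upd_char:
  assumes "ps = Top \<or> ps = Atom a0 \<or> ps = Neg (Atom a0)"
  shows "(entails ps (Atom q) \<or> ((q = a0 \<and> b) \<and> \<not> entails ps (Neg (Atom q)))) = (q = a0 \<and> newlab ps a0 b)"
  using assms unfolding newlab_def by (auto simp: entails_lemmas)

lemma upd_bis_mk:
  fixes Ws :: "'s::countable set" and Ws' :: "'t::countable set" and As :: "'b::countable set"
    and a0 :: 'a and pr ps :: "'b \<Rightarrow> ('a, 'i) form"
  assumes posts: "\<forall>\<sigma>\<in>As. ps \<sigma> = Top \<or> ps \<sigma> = Atom a0 \<or> ps \<sigma> = Neg (Atom a0)"
    and Z1: "\<And>s \<sigma> t. Z s \<sigma> t \<Longrightarrow> s \<in> Ws \<and> \<sigma> \<in> As \<and> sat (mkM Ws r lab a0) (to_nat s) (pr \<sigma>) \<and> t \<in> Ws'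
             \<and> lab' t = newlab (ps \<sigma>) a0 (lab s)"
    and fw: "\<And>s \<sigma> t s' \<sigma>'. Z s \<sigma> t \<Longrightarrow> s' \<in> Ws \<Longrightarrow> r s s' \<Longrightarrow> \<sigma>' \<in> As \<Longrightarrow> ar \<sigma> \<sigma>'
             \<Longrightarrow> sat (mkM Ws r lab a0) (to_nat s') (pr \<sigma>') \<Longrightarrow> \<exists>t'\<in>Ws'. r' t t' \<and> Z s' \<sigma>' t'"
    and bk: "\<And>s \<sigma> t t'. Z s \<sigma> t \<Longrightarrow> t' \<in> Ws' \<Longrightarrow> r' t t' \<Longrightarrow> \<exists>s' \<sigma>'. s' \<in> Ws \<and> r s s' \<and> \<sigma>' \<in> As \<and> ar \<sigma> \<sigma>' \<and> Z s' \<sigma>' t'"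
    and z0: "Z s0 sgz t0"
    and des: "des_act (mkA As ar pr ps Ds) (mkM Ws r lab a0, to_nat s0) = to_nat sgz"
  shows "bis (upd (mkM Ws r lab a0, to_nat s0) (mkA As ar pr ps Ds)) (mkM Ws' r' lab' a0 :: ('a, 'i) kmodel, to_nat t0)"
proof -
  let ?M = "mkM Ws r lab a0 :: ('a, 'i) kmodel"
  let ?M' = "mkM Ws' r' lab' a0 :: ('a, 'i) kmodel"
  let ?S = "mkA As ar pr ps Ds"
  define Z' where "Z' = (\<lambda>u v. \<exists>s \<sigma> t. u = prod_encode (to_nat s, to_nat \<sigma>) \<and> v = to_nat t \<and> Z s \<sigma> t)"
  have inW: "prod_encode (to_nat s, to_nat \<sigma>) \<in> upd_W ?M ?S" if "Z s \<sigma> t" for s \<sigma> t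
    using Z1[OF that] unfolding upd_W_def by auto
  have "bisim (upd_model ?M ?S) ?M' Z'"
    unfolding bisim_def
  proof (intro allI impI)
    fix u v assume "Z' u v"
    then obtain s \<sigma> t where e: "u = prod_encode (to_nat s, to_nat \<sigma>)" "v = to_nat t" "Z s \<sigma> t"
      unfolding Z'_def by blast
    note z = Z1[OF e(3)]
    have uW: "u \<in> upd_W ?M ?S" using inW e by simp
    have val: "(u \<in> Val (upd_model ?M ?S) q) = (v \<in> Val ?M' q)" for q
    proof -
      have "(u \<in> Val (upd_model ?M ?S) q) = (entails (ps \<sigma>) (Atom q) \<or> ((q = a0 \<and> lab s) \<and> \<not> entails (ps \<sigma>) (Neg (Atom q))))"
        using uW e z by (simp add: upd_model_def)
      also have "\<dots> = (q = a0 \<and> newlab (ps \<sigma>) a0 (lab s))"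
        using val_upd_char[of "ps \<sigma>" a0 q "lab s"] posts z by simp
      also have "\<dots> = (v \<in> Val ?M' q)" using e z by simp
      finally show ?thesis .
    qed
    have fw': "\<exists>v'. v' \<in> W ?M' \<and> Rel ?M' i v v' \<and> Z' w v'"
      if "w \<in> W (upd_model ?M ?S)" "Rel (upd_model ?M ?S) i u w" for i w
    proof -
      from that have w: "w \<in> upd_W ?M ?S" "Rel ?M i (to_nat s) (fst (prod_decode w))"
          "ARel ?S i (to_nat \<sigma>) (snd (prod_decode w))"
        using e by (auto simp: upd_model_def)
      from w(1) obtain s1 \<tau>1 where w1: "w = prod_encode (s1, \<tau>1)" "s1 \<in> W ?M" "\<tau>1 \<in> Act ?S" "sat ?M s1 (pre ?S \<tau>1)"
        unfolding upd_W_def by blast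
      then obtain s' \<sigma>' where s': "s1 = to_nat s'" "s' \<in> Ws" "\<tau>1 = to_nat \<sigma>'" "\<sigma>' \<in> As" by auto
      have rs: "r s s'" "ar \<sigma> \<sigma>'" "sat ?M (to_nat s') (pr \<sigma>')" using w w1 s' by auto
      obtain t' where t': "t' \<in> Ws'" "r' t t'" "Z s' \<sigma>' t'" using fw[OF e(3) s'(2) rs(1) s'(4) rs(2) rs(3)] by blast
      show ?thesis using t' z e w1 s' unfolding Z'_def by (intro exI[of _ "to_nat t'"]) auto
    qed
    have bk': "\<exists>w. w \<in> W (upd_model ?M ?S) \<and> Rel (upd_model ?M ?S) i u w \<and> Z' w v'"
      if "v' \<in> W ?M'" "Rel ?M' i v v'" for i v'
    proof -
      have "v' \<in> to_nat ` Ws'" using that(1) by simp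
      then obtain t' where t': "v' = to_nat t'" "t' \<in> Ws'" by blast
      have "r' t t'" using that t' e by auto
      then obtain s' \<sigma>' where s': "s' \<in> Ws" "r s s'" "\<sigma>' \<in> As" "ar \<sigma> \<sigma>'" "Z s' \<sigma>' t'"
        using bk[OF e(3) t'(2)] by blast
      have "prod_encode (to_nat s', to_nat \<sigma>') \<in> upd_W ?M ?S" using inW s' by blast
      then show ?thesis using s' uW e z t' unfolding Z'_def
        by (intro exI[of _ "prod_encode (to_nat s', to_nat \<sigma>')"]) (auto simp: upd_model_def)
    qed
    show "u \<in> W (upd_model ?M ?S) \<and> v \<in> W ?M' \<and> (\<forall>q. (u \<in> Val (upd_model ?M ?S) q) = (v \<in> Val ?M' q)) \<and>
       (\<forall>i u'. u' \<in> W (upd_model ?M ?S) \<and> Rel (upd_model ?M ?S) i u u' \<longrightarrow> (\<exists>v'. v' \<in> W ?M' \<and> Rel ?M' i v v' \<and> Z' u' v')) \<and>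
       (\<forall>i v'. v' \<in> W ?M' \<and> Rel ?M' i v v' \<longrightarrow> (\<exists>u'. u' \<in> W (upd_model ?M ?S) \<and> Rel (upd_model ?M ?S) i u u' \<and> Z' u' v'))"
    proof (intro conjI allI impI)
      show "u \<in> W (upd_model ?M ?S)" using uW by (simp add: upd_model_def)
      show "v \<in> W ?M'" using e z by simp
      show "(u \<in> Val (upd_model ?M ?S) q) = (v \<in> Val ?M' q)" for q using val .
      show "\<exists>v'. v' \<in> W ?M' \<and> Rel ?M' i v v' \<and> Z' u' v'"
        if "u' \<in> W (upd_model ?M ?S) \<and> Rel (upd_model ?M ?S) i u u'" for i u' using that fw' by blast
      show "\<exists>u'. u' \<in> W (upd_model ?M ?S) \<and> Rel (upd_model ?M ?S) i u u' \<and> Z' u' v'"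
        if "v' \<in> W ?M' \<and> Rel ?M' i v v'" for i v' using that bk' by blast
    qed
  qed
  moreover have "Z' (snd (upd (?M, to_nat s0) ?S)) (to_nat t0)"
    unfolding Z'_def upd_def using z0 des by simp
  ultimately show ?thesis unfolding bis_def upd_def by auto
qed




datatype sst = SR | SF | SG | SN nat nat
instance sst :: countable by countable_datatype
datatype sact = SD nat | SAcp | SGj nat | SEj nat | SCc
instance sact :: countable by countable_datatype

definition Ws_s :: "nat \<Rightarrow> sst set" where
  "Ws_s n = {SR, SF, SG} \<union> {SN j h | j h. h \<le> j \<and> j \<le> n}"

fun rel_s :: "nat \<Rightarrow> nat \<Rightarrow> sst \<Rightarrow> sst \<Rightarrow> bool" where
  "rel_s n k SR v = (v = SF \<or> v = SG)"
| "rel_s n k SF v = (\<exists>j\<le>n. v = SN j j)"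
| "rel_s n k SG v = (\<exists>j<n. j \<noteq> k \<and> v = SN j j)"
| "rel_s n k (SN j h) v = (0 < h \<and> v = SN j (h - 1))"

definition Ms :: "nat \<Rightarrow> nat \<Rightarrow> 'a \<Rightarrow> ('a, 'i) kmodel" where
  "Ms n k a0 = mkM (Ws_s n) (rel_s n k) (\<lambda>_. False) a0"

definition Dd :: "'i \<Rightarrow> nat \<Rightarrow> ('a, 'i) form" where
  "Dd i0 m = (dia i0 ^^ m) Top"

definition eta :: "'i \<Rightarrow> nat \<Rightarrow> ('a, 'i) form" where
  "eta i0 h = Conj (Dd i0 h) (Neg (Dd i0 (Suc h)))"

definition chi :: "'i \<Rightarrow> nat \<Rightarrow> ('a, 'i) form" where
  "chi i0 k = Box i0 (Neg (eta i0 k))"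

lemma SN_in[simp]: "(SN j h \<in> Ws_s n) = (h \<le> j \<and> j \<le> n)"
  and SR_in[simp]: "SR \<in> Ws_s n" and SF_in[simp]: "SF \<in> Ws_s n" and SG_in[simp]: "SG \<in> Ws_s n"
  by (auto simp: Ws_s_def)

context fixes a0 :: 'a and i0 :: 'i
begin

lemma sat_Dd:
  assumes "h \<le> j" "j \<le> n"
  shows "sat (Ms n k a0 :: ('a, 'i) kmodel) (to_nat (SN j h)) (Dd i0 m) = (m \<le> h)"
  using assms
proof (induction m arbitrary: h)
  case 0
  then show ?case by (simp add: Dd_def Ms_def)
next
  case (Suc m)
  have "Dd i0 (Suc m) = (dia i0 (Dd i0 m) :: ('a, 'i) form)" by (simp add: Dd_def)
  then have "sat (Ms n k a0 :: ('a, 'i) kmodel) (to_nat (SN j h)) (Dd i0 (Suc m)) =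
      (0 < h \<and> sat (Ms n k a0 :: ('a, 'i) kmodel) (to_nat (SN j (h - 1))) (Dd i0 m))"
    using Suc.prems unfolding Ms_def by (auto simp: sat_mk_dia)
  also have "\<dots> = (Suc m \<le> h)" using Suc by auto
  finally show ?case .
qed

lemma sat_eta:
  assumes "h \<le> j" "j \<le> n"
  shows "sat (Ms n k a0 :: ('a, 'i) kmodel) (to_nat (SN j h)) (eta i0 h') = (h' = h)"
  using sat_Dd[OF assms, of k] unfolding eta_def by auto

lemma sat_SF_dia_eta: "sat (Ms n k a0 :: ('a, 'i) kmodel) (to_nat SF) (dia i0 (eta i0 n))"
proof -
  have "sat (Ms n k a0 :: ('a, 'i) kmodel) (to_nat (SN n n)) (eta i0 n)" using sat_eta[of n n n k n] by simp
  then show ?thesis unfolding Ms_def by (auto simp: sat_mk_dia intro!: bexI[of _ "SN n n"])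
qed

lemma sat_SG_dia_eta: "\<not> sat (Ms n k a0 :: ('a, 'i) kmodel) (to_nat SG) (dia i0 (eta i0 n))"
proof -
  have "\<not> sat (Ms n k a0 :: ('a, 'i) kmodel) (to_nat (SN j j)) (eta i0 n)" if "j < n" for j
    using sat_eta[of j j n k n] that by simp
  then show ?thesis unfolding Ms_def by (auto simp: sat_mk_dia)
qed

lemma sat_SF_chi: "k' \<le> n \<Longrightarrow> \<not> sat (Ms n k a0 :: ('a, 'i) kmodel) (to_nat SF) (chi i0 k')"
proof -
  assume k': "k' \<le> n"
  have "sat (Ms n k a0 :: ('a, 'i) kmodel) (to_nat (SN k' k')) (eta i0 k')" using sat_eta[of k' k' n k k'] k' by simp
  then show ?thesis using k' unfolding Ms_def chi_def by (auto simp: sat_mk_Box)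
qed

lemma sat_SG_chi: "k' < n \<Longrightarrow> sat (Ms n k a0 :: ('a, 'i) kmodel) (to_nat SG) (chi i0 k') = (k' = k)"
proof -
  assume k': "k' < n"
  have e: "sat (Ms n k a0 :: ('a, 'i) kmodel) (to_nat (SN j j)) (eta i0 k') = (k' = j)" if "j \<le> n" for j
    using sat_eta[of j j n k k'] that by simp
  show ?thesis
  proof
    assume "sat (Ms n k a0 :: ('a, 'i) kmodel) (to_nat SG) (chi i0 k')"
    then have "\<forall>j<n. j \<noteq> k \<longrightarrow> \<not> sat (Ms n k a0 :: ('a, 'i) kmodel) (to_nat (SN j j)) (eta i0 k')"
      unfolding Ms_def chi_def by (auto simp: sat_mk_Box)
    then show "k' = k" using e k' by auto
  next
    assume "k' = k"
    then show "sat (Ms n k a0 :: ('a, 'i) kmodel) (to_nat SG) (chi i0 k')"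
      using e unfolding Ms_def chi_def by (auto simp: sat_mk_Box)
  qed
qed

lemma sat_SR_pre: "k' < n \<Longrightarrow> sat (Ms n k a0 :: ('a, 'i) kmodel) (to_nat SR) (dia i0 (chi i0 k')) = (k' = k)"
proof -
  assume k': "k' < n"
  have "sat (Ms n k a0 :: ('a, 'i) kmodel) (to_nat SR) (dia i0 (chi i0 k')) =
     (sat (Ms n k a0 :: ('a, 'i) kmodel) (to_nat SF) (chi i0 k') \<or> sat (Ms n k a0 :: ('a, 'i) kmodel) (to_nat SG) (chi i0 k'))"
    unfolding Ms_def by (auto simp: sat_mk_dia)
  then show ?thesis using sat_SF_chi[of k' n k] sat_SG_chi[OF k', of k] k' by auto
qed

end

definition As_s :: "nat \<Rightarrow> sact set" where
  "As_s n = SD ` {..<n} \<union> {SAcp, SCc} \<union> SGj ` {..<n} \<union> SEj ` {..<n}"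

fun ar_s :: "nat \<Rightarrow> sact \<Rightarrow> sact \<Rightarrow> bool" where
  "ar_s n (SD k) t = (t = SAcp \<or> t = SGj (Suc k mod n))"
| "ar_s n SAcp t = (t = SCc)"
| "ar_s n (SGj j) t = (t = SEj j)"
| "ar_s n (SEj j) t = (t = SCc)"
| "ar_s n SCc t = (t = SCc)"

fun pr_s :: "'i \<Rightarrow> nat \<Rightarrow> sact \<Rightarrow> ('a, 'i) form" where
  "pr_s i0 n (SD k) = dia i0 (chi i0 k)"
| "pr_s i0 n SAcp = dia i0 (eta i0 n)"
| "pr_s i0 n (SGj j) = dia i0 (eta i0 n)"
| "pr_s i0 n (SEj j) = Conj (Neg (eta i0 j)) (Neg (eta i0 n))"
| "pr_s i0 n SCc = Top"

definition Ss :: "'i \<Rightarrow> nat \<Rightarrow> ('a, 'i) amodel" where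
  "Ss i0 n = mkA (As_s n) (ar_s n) (pr_s i0 n) (\<lambda>_. Top) (SD ` {..<n})"

lemma As_s_simps[simp]:
  "(SD k \<in> As_s n) = (k < n)" "SAcp \<in> As_s n" "SCc \<in> As_s n"
  "(SGj j \<in> As_s n) = (j < n)" "(SEj j \<in> As_s n) = (j < n)"
  by (auto simp: As_s_def)


context fixes a0 :: 'a and i0 :: 'i
begin

lemmas sat_simps_s = sat_SF_dia_eta[unfolded Ms_def] sat_SG_dia_eta[unfolded Ms_def]
  sat_eta[unfolded Ms_def] sat_SR_pre[unfolded Ms_def]

lemma static_des:
  assumes "c < n"
  shows "des_act (Ss i0 n) (Ms n c a0 :: ('a, 'i) kmodel, to_nat SR) = to_nat (SD c)"
  unfolding des_act_def
proof (rule the_equality)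
  show "to_nat (SD c) \<in> Des (Ss i0 n) \<and> psat (Ms n c a0 :: ('a, 'i) kmodel, to_nat SR) (pre (Ss i0 n) (to_nat (SD c)))"
    using sat_SR_pre[OF assms, of c a0 i0] assms by (simp add: Ss_def psat_def)
next
  fix \<sigma> assume "\<sigma> \<in> Des (Ss i0 n) \<and> psat (Ms n c a0 :: ('a, 'i) kmodel, to_nat SR) (pre (Ss i0 n) \<sigma>)"
  then obtain k where k: "\<sigma> = to_nat (SD k)" "k < n" "sat (Ms n c a0 :: ('a, 'i) kmodel) (to_nat SR) (dia i0 (chi i0 k))"
    by (auto simp: Ss_def psat_def)
  then show "\<sigma> = to_nat (SD c)" using sat_SR_pre[OF k(2), of c a0 i0] by simp
qed

lemma static_step:
  assumes n: "1 \<le> n" "c < n"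
  shows "bis (upd (Ms n c a0, to_nat SR) (Ss i0 n)) (Ms n (Suc c mod n) a0 :: ('a, 'i) kmodel, to_nat SR)"
proof -
  define c' where "c' = Suc c mod n"
  have c': "c' < n" using n unfolding c'_def by simp
  define Z where "Z s \<sigma> t = ((s = SR \<and> \<sigma> = SD c \<and> t = SR) \<or> (s = SF \<and> \<sigma> = SAcp \<and> t = SF)
     \<or> (s = SF \<and> \<sigma> = SGj c' \<and> t = SG) \<or> (\<exists>j h. h \<le> j \<and> j \<le> n \<and> s = SN j h \<and> \<sigma> = SCc \<and> t = s)
     \<or> (\<exists>j. j < n \<and> j \<noteq> c' \<and> s = SN j j \<and> \<sigma> = SEj c' \<and> t = s))" for s \<sigma> t
  have "bis (upd (mkM (Ws_s n) (rel_s n c) (\<lambda>_. False) a0, to_nat SR) (mkA (As_s n) (ar_s n) (pr_s i0 n) (\<lambda>_. Top) (SD ` {..<n})))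
     (mkM (Ws_s n) (rel_s n c') (\<lambda>_. False) a0 :: ('a, 'i) kmodel, to_nat SR)"
  proof (rule upd_bis_mk[where Z = Z and sgz = "SD c"])
    show "\<forall>\<sigma>\<in>As_s n. Top = Top \<or> Top = Atom a0 \<or> (Top :: ('a, 'i) form) = Neg (Atom a0)" by simp
    show "s \<in> Ws_s n \<and> \<sigma> \<in> As_s n \<and> sat (mkM (Ws_s n) (rel_s n c) (\<lambda>_. False) a0 :: ('a, 'i) kmodel) (to_nat s) (pr_s i0 n \<sigma>)
        \<and> t \<in> Ws_s n \<and> False = newlab Top a0 False" if "Z s \<sigma> t" for s \<sigma> t
      using that n c' unfolding Z_def by (auto simp: newlab_def sat_simps_s)
    show "\<exists>t'\<in>Ws_s n. rel_s n c' t t' \<and> Z s' \<sigma>' t'"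
      if H: "Z s \<sigma> t" "s' \<in> Ws_s n" "rel_s n c s s'" "\<sigma>' \<in> As_s n" "ar_s n \<sigma> \<sigma>'"
         "sat (mkM (Ws_s n) (rel_s n c) (\<lambda>_. False) a0 :: ('a, 'i) kmodel) (to_nat s') (pr_s i0 n \<sigma>')" for s \<sigma> t s' \<sigma>'
    proof -
      from H(1) consider (a) "s = SR" "\<sigma> = SD c" "t = SR" | (b) "s = SF" "\<sigma> = SAcp" "t = SF"
        | (c) "s = SF" "\<sigma> = SGj c'" "t = SG" | (d) j h where "h \<le> j" "j \<le> n" "s = SN j h" "\<sigma> = SCc" "t = s"
        | (e) j where "j < n" "j \<noteq> c'" "s = SN j j" "\<sigma> = SEj c'" "t = s"
        unfolding Z_def by blast
      then show ?thesis
      proof cases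
        case a
        have sa: "\<sigma>' = SAcp \<or> \<sigma>' = SGj c'" using H(5) a unfolding c'_def by simp
        then have "sat (mkM (Ws_s n) (rel_s n c) (\<lambda>_. False) a0 :: ('a, 'i) kmodel) (to_nat s') (dia i0 (eta i0 n))"
          using H(6) by auto
        moreover have "s' = SF \<or> s' = SG" using H(3) a by simp
        ultimately have "s' = SF" using sat_simps_s(2)[of n c a0 i0] by auto
        then show ?thesis using sa a unfolding Z_def by auto
      next
        case b
        then obtain j where j: "j \<le> n" "s' = SN j j" using H(3) by auto
        have "\<sigma>' = SCc" using H(5) b by simp
        then show ?thesis using j b unfolding Z_def by auto
      next
        case c
        then obtain j where j: "j \<le> n" "s' = SN j j" using H(3) by auto
        have s: "\<sigma>' = SEj c'" using H(5) c by simp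
        then have "j \<noteq> c'" "j \<noteq> n" using H(6) j by (auto simp: sat_simps_s)
        then show ?thesis using j c s unfolding Z_def by auto
      next
        case d
        then have "0 < h" "s' = SN j (h - 1)" "\<sigma>' = SCc" using H(3,5) by auto
        then show ?thesis using d unfolding Z_def by auto
      next
        case e
        then have "0 < j" "s' = SN j (j - 1)" "\<sigma>' = SCc" using H(3,5) by auto
        then show ?thesis using e unfolding Z_def by auto
      qed
    qed
    show "\<exists>s' \<sigma>'. s' \<in> Ws_s n \<and> rel_s n c s s' \<and> \<sigma>' \<in> As_s n \<and> ar_s n \<sigma> \<sigma>' \<and> Z s' \<sigma>' t'"
      if H: "Z s \<sigma> t" "t' \<in> Ws_s n" "rel_s n c' t t'" for s \<sigma> t t'
    proof -
      from H(1) consider (a) "s = SR" "\<sigma> = SD c" "t = SR" | (b) "s = SF" "\<sigma> = SAcp" "t = SF"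
        | (c) "s = SF" "\<sigma> = SGj c'" "t = SG" | (d) j h where "h \<le> j" "j \<le> n" "s = SN j h" "\<sigma> = SCc" "t = s"
        | (e) j where "j < n" "j \<noteq> c'" "s = SN j j" "\<sigma> = SEj c'" "t = s"
        unfolding Z_def by blast
      then show ?thesis
      proof cases
        case a
        then have "t' = SF \<or> t' = SG" using H(3) by simp
        then show ?thesis
        proof
          assume "t' = SF" then show ?thesis using a c' unfolding Z_def
            by (intro exI[of _ SF] exI[of _ SAcp]) auto
        next
          assume "t' = SG" then show ?thesis using a c' unfolding Z_def c'_def
            by (intro exI[of _ SF] exI[of _ "SGj c'"]) (auto simp: c'_def)
        qed
      next
        case b
        then obtain j where j: "j \<le> n" "t' = SN j j" using H(3) by auto
        then show ?thesis using b unfolding Z_def by (intro exI[of _ "SN j j"] exI[of _ SCc]) auto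
      next
        case c
        then obtain j where j: "j < n" "j \<noteq> c'" "t' = SN j j" using H(3) by auto
        then show ?thesis using c c' unfolding Z_def by (intro exI[of _ "SN j j"] exI[of _ "SEj c'"]) auto
      next
        case d
        then have "0 < h" "t' = SN j (h - 1)" using H(3) by auto
        then show ?thesis using d unfolding Z_def by (intro exI[of _ "SN j (h - 1)"] exI[of _ SCc]) auto
      next
        case e
        then have "0 < j" "t' = SN j (j - 1)" using H(3) by auto
        then show ?thesis using e unfolding Z_def by (intro exI[of _ "SN j (j - 1)"] exI[of _ SCc]) auto
      qed
    qed
    show "Z SR (SD c) SR" unfolding Z_def by simp
    show "des_act (mkA (As_s n) (ar_s n) (pr_s i0 n) (\<lambda>_. Top) (SD ` {..<n})) (mkM (Ws_s n) (rel_s n c) (\<lambda>_. False) a0 :: ('a, 'i) kmodel, to_nat SR) = to_nat (SD c)"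
      using static_des[OF n(2)] unfolding Ss_def Ms_def .
  qed
  then show ?thesis unfolding Ms_def Ss_def c'_def .
qed

end


lemma static_part:
  fixes a0 :: 'a and i0 :: 'i and \<Lambda> :: "('a, 'i) form set"
  assumes n: "n \<ge> 1" and NL: "normal_logic \<Lambda>"
  shows "\<exists>(X :: ('a, 'i) pointed set) S f x.
            (\<forall>y \<in> X. wf_pointed y) \<and> clean_amodel \<Lambda> X S \<and> induced_map X S f
            \<and> finite_am S \<and> static_am S \<and> \<not> boolean_am S
            \<and> x \<in> X \<and> periodic_orbit f (mclass X x) \<and> orbit_period f (mclass X x) = n"
proof -
  define xs where "xs c = (Ms n c a0 :: ('a, 'i) kmodel, to_nat SR)" for c
  define S where "S = (Ss i0 n :: ('a, 'i) amodel)"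
  have finA: "finite (As_s n)" unfolding As_s_def by simp
  have props: "finite_am S \<and> static_am S \<and> \<not> boolean_am S"
  proof (intro conjI)
    show "finite_am S" unfolding finite_am_def S_def Ss_def using finA by simp
    show "static_am S" unfolding static_am_def S_def Ss_def by simp
    have "to_nat (SD 0) \<in> Act S" using n unfolding S_def Ss_def by simp
    moreover have "\<not> modality_free (pre S (to_nat (SD 0)))" unfolding S_def Ss_def by (simp add: dia_def)
    ultimately show "\<not> boolean_am S" unfolding boolean_am_def by blast
  qed
  have "\<exists>X f x. (\<forall>y \<in> X. wf_pointed y) \<and> clean_amodel \<Lambda> X S \<and> induced_map X S f
            \<and> x \<in> X \<and> periodic_orbit f (mclass X x) \<and> orbit_period f (mclass X x) = n"
  proof (rule generic[OF n NL])
    show "wf_pointed (xs c)" for c unfolding xs_def Ms_def by (rule wf_mk) simp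
    show "wf_amodel S" unfolding wf_amodel_def S_def Ss_def using n
      by (auto simp: valid_post_def image_iff As_s_def lessThan_empty_iff)
    show "finite (Act S)" unfolding S_def Ss_def using finA by simp
    show "\<exists>!\<sigma>. \<sigma> \<in> Des S \<and> psat (xs c) (pre S \<sigma>)" if c: "c < n" for c
    proof -
      have d: "des_act S (xs c) = to_nat (SD c)" using static_des[OF c] unfolding xs_def S_def .
      show ?thesis
      proof (rule ex1I[of _ "to_nat (SD c)"])
        show "to_nat (SD c) \<in> Des S \<and> psat (xs c) (pre S (to_nat (SD c)))"
          using sat_SR_pre[OF c, of c a0 i0] c by (simp add: S_def Ss_def psat_def xs_def)
        fix \<sigma> assume "\<sigma> \<in> Des S \<and> psat (xs c) (pre S \<sigma>)"
        then obtain k where k: "\<sigma> = to_nat (SD k)" "k < n" "sat (Ms n c a0 :: ('a, 'i) kmodel) (to_nat SR) (dia i0 (chi i0 k))"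
          by (auto simp: S_def Ss_def psat_def xs_def)
        then show "\<sigma> = to_nat (SD c)" using sat_SR_pre[OF k(2), of c a0 i0] by simp
      qed
    qed
    show "bis (upd (xs c) S) (xs (Suc c mod n))" if "c < n" for c
      using static_step[OF n that] unfolding xs_def S_def .
    show "c = d" if "c < n" "d < n" "mequiv (xs c) (xs d)" for c d
    proof -
      have "psat (xs c) (dia i0 (chi i0 c))" using sat_SR_pre[OF that(1), of c a0 i0] by (simp add: psat_def xs_def)
      then have "psat (xs d) (dia i0 (chi i0 c))" using that(3) unfolding mequiv_def by simp
      then show ?thesis using sat_SR_pre[OF that(1), of d a0 i0] by (simp add: psat_def xs_def)
    qed
  qed
  then show ?thesis using props by blast
qed




datatype bst = BR | BN nat nat nat
instance bst :: countable by countable_datatype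
datatype bact = B0 | BA nat nat
instance bact :: countable by countable_datatype

definition valid :: "nat \<Rightarrow> nat \<Rightarrow> nat \<Rightarrow> nat \<Rightarrow> bool" where
  "valid n c m p = ((1 \<le> m \<and> m \<le> n \<and> p \<le> Suc n) \<or> (m = Suc n \<and> p = c))"

definition Ws_b :: "nat \<Rightarrow> nat \<Rightarrow> bst set" where
  "Ws_b n c = {BR} \<union> {BN m p d | m p d. valid n c m p \<and> 1 \<le> d \<and> d \<le> m}"

fun rel_b :: "bst \<Rightarrow> bst \<Rightarrow> bool" where
  "rel_b BR v = (\<exists>m p. v = BN m p 1)"
| "rel_b (BN m p d) v = (d < m \<and> v = BN m p (Suc d))"

fun lab_b :: "bst \<Rightarrow> bool" where
  "lab_b BR = False"
| "lab_b (BN m p d) = (d = p)"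

definition Mb :: "nat \<Rightarrow> nat \<Rightarrow> 'a \<Rightarrow> ('a, 'i) kmodel" where
  "Mb n c a0 = mkM (Ws_b n c) rel_b lab_b a0"

definition nx :: "nat \<Rightarrow> nat \<Rightarrow> nat" where
  "nx n i = (if i < n then Suc i else 1)"

definition As_b :: "nat \<Rightarrow> bact set" where
  "As_b n = {B0} \<union> {BA i l | i l. i \<le> n \<and> 1 \<le> l \<and> l \<le> (if i = 0 then n else Suc n)}"

fun ar_b :: "bact \<Rightarrow> bact \<Rightarrow> bool" where
  "ar_b B0 t = (\<exists>i. t = BA i 1)"
| "ar_b (BA i l) t = (t = BA i (Suc l))"

definition lit :: "'a \<Rightarrow> bool \<Rightarrow> ('a, 'i) form" where
  "lit a0 b = (if b then Atom a0 else Neg (Atom a0))"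

fun pr_b :: "'a \<Rightarrow> bact \<Rightarrow> ('a, 'i) form" where
  "pr_b a0 B0 = Top"
| "pr_b a0 (BA i l) = (if i = 0 then Top else lit a0 (l = i))"

fun ps_b :: "'a \<Rightarrow> nat \<Rightarrow> bact \<Rightarrow> ('a, 'i) form" where
  "ps_b a0 n B0 = Top"
| "ps_b a0 n (BA i l) = (if i = 0 then Top else lit a0 (l = nx n i))"

definition Sb :: "'a \<Rightarrow> nat \<Rightarrow> ('a, 'i) amodel" where
  "Sb a0 n = mkA (As_b n) ar_b (pr_b a0) (ps_b a0 n) {B0}"

definition outlen :: "nat \<Rightarrow> nat \<Rightarrow> nat \<Rightarrow> nat \<Rightarrow> nat" where
  "outlen n i m p = (if i = 0 then min m n else if p = i then m else if p = 0 then min m (i - 1) else min m (min p i - 1))"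

definition outmark :: "nat \<Rightarrow> nat \<Rightarrow> nat \<Rightarrow> nat" where
  "outmark n i p = (if i = 0 then p else nx n i)"

lemma BN_in[simp]: "(BN m p d \<in> Ws_b n c) = (valid n c m p \<and> 1 \<le> d \<and> d \<le> m)"
  and BR_in[simp]: "BR \<in> Ws_b n c"
  by (auto simp: Ws_b_def)

lemma BA_in[simp]: "(BA i l \<in> As_b n) = (i \<le> n \<and> 1 \<le> l \<and> l \<le> (if i = 0 then n else Suc n))"
  and B0_in[simp]: "B0 \<in> As_b n"
  by (auto simp: As_b_def)

lemma outlen_le: "outlen n i m p \<le> m"
  unfolding outlen_def by auto

lemma pre_ok: "i \<noteq> 0 \<Longrightarrow> 1 \<le> d \<Longrightarrow> d \<le> outlen n i m p \<Longrightarrow> (d = p) = (d = i)"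
  unfolding outlen_def by (auto split: if_splits)

lemma step_len: "i \<noteq> 0 \<Longrightarrow> d \<le> outlen n i m p \<Longrightarrow> Suc d \<le> m \<Longrightarrow> (Suc d = p) = (Suc d = i) \<Longrightarrow> Suc d \<le> outlen n i m p"
  unfolding outlen_def by (auto split: if_splits)

lemma first_len: "i \<noteq> 0 \<Longrightarrow> (1 = p) = (1 = i) \<Longrightarrow> 1 \<le> m \<Longrightarrow> 1 \<le> outlen n i m p"
  unfolding outlen_def by (auto split: if_splits)

lemma valid_out:
  assumes "valid n c m p" "i \<le> n" "1 \<le> outlen n i m p" "1 \<le> n" "1 \<le> c" "c \<le> n"
  shows "valid n (nx n c) (outlen n i m p) (outmark n i p)"
  using assms unfolding valid_def outlen_def outmark_def nx_def by (auto split: if_splits)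

lemma newlab_lit: "newlab (lit a0 b) a0 x = b"
  unfolding newlab_def lit_def by auto

lemma sat_lit: "s \<in> Ws \<Longrightarrow> sat (mkM Ws r lab a0) (to_nat s) (lit a0 b) = (lab s = b)"
  unfolding lit_def by auto


context fixes a0 :: 'a and i0 :: 'i
begin

lemma bool_des:
  "des_act (Sb a0 n) (Mb n c a0 :: ('a, 'i) kmodel, to_nat BR) = to_nat B0"
  unfolding des_act_def
proof (rule the_equality)
  show "to_nat B0 \<in> Des (Sb a0 n) \<and> psat (Mb n c a0 :: ('a, 'i) kmodel, to_nat BR) (pre (Sb a0 n :: ('a, 'i) amodel) (to_nat B0))"
    by (simp add: Sb_def psat_def)
next
  fix \<sigma> assume "\<sigma> \<in> Des (Sb a0 n :: ('a, 'i) amodel) \<and> psat (Mb n c a0 :: ('a, 'i) kmodel, to_nat BR) (pre (Sb a0 n) \<sigma>)"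
  then show "\<sigma> = to_nat B0" by (simp add: Sb_def)
qed

lemma bool_step:
  assumes n: "1 \<le> n" and c: "1 \<le> c" "c \<le> n"
  shows "bis (upd (Mb n c a0, to_nat BR) (Sb a0 n)) (Mb n (nx n c) a0 :: ('a, 'i) kmodel, to_nat BR)"
proof -
  define c' where "c' = nx n c"
  define Z where "Z s \<sigma> t = ((s = BR \<and> \<sigma> = B0 \<and> t = BR) \<or> (\<exists>m p i d. s = BN m p d \<and> valid n c m p \<and> \<sigma> = BA i d
      \<and> i \<le> n \<and> 1 \<le> d \<and> d \<le> outlen n i m p \<and> t = BN (outlen n i m p) (outmark n i p) d))" for s \<sigma> t
  let ?M = "mkM (Ws_b n c) rel_b lab_b a0 :: ('a, 'i) kmodel"
  have "bis (upd (?M, to_nat BR) (mkA (As_b n) ar_b (pr_b a0) (ps_b a0 n) {B0}))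
     (mkM (Ws_b n c') rel_b lab_b a0 :: ('a, 'i) kmodel, to_nat BR)"
  proof (rule upd_bis_mk[where Z = Z and sgz = B0])
    show "\<forall>\<sigma>\<in>As_b n. ps_b a0 n \<sigma> = Top \<or> ps_b a0 n \<sigma> = Atom a0 \<or> (ps_b a0 n \<sigma> :: ('a, 'i) form) = Neg (Atom a0)"
    proof
      fix \<sigma> :: bact show "ps_b a0 n \<sigma> = Top \<or> ps_b a0 n \<sigma> = Atom a0 \<or> (ps_b a0 n \<sigma> :: ('a, 'i) form) = Neg (Atom a0)"
        by (cases \<sigma>) (auto simp: lit_def)
    qed
    show "s \<in> Ws_b n c \<and> \<sigma> \<in> As_b n \<and> sat ?M (to_nat s) (pr_b a0 \<sigma>) \<and> t \<in> Ws_b n c'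
        \<and> lab_b t = newlab (ps_b a0 n \<sigma>) a0 (lab_b s)" if H: "Z s \<sigma> t" for s \<sigma> t
    proof -
      from H consider (r) "s = BR" "\<sigma> = B0" "t = BR" | (b) m p i d where "s = BN m p d" "valid n c m p" "\<sigma> = BA i d"
        "i \<le> n" "1 \<le> d" "d \<le> outlen n i m p" "t = BN (outlen n i m p) (outmark n i p) d"
        unfolding Z_def by blast
      then show ?thesis
      proof cases
        case r then show ?thesis by (simp add: newlab_def)
      next
        case b
        have le: "outlen n i m p \<le> m" by (rule outlen_le)
        have vm: "m \<le> Suc n" using b(2) unfolding valid_def by auto
        have i0le: "i = 0 \<Longrightarrow> outlen n i m p \<le> n" unfolding outlen_def by simp
        have sW: "s \<in> Ws_b n c" using b le by simp
        have aA: "\<sigma> \<in> As_b n" using b le vm i0le by auto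
        have pre: "sat ?M (to_nat s) (pr_b a0 \<sigma>)"
        proof (cases "i = 0")
          case True then show ?thesis using b by simp
        next
          case False
          then show ?thesis using b sW pre_ok[OF False b(5) b(6)] by (simp add: sat_lit)
        qed
        have tW: "t \<in> Ws_b n c'" using b valid_out[OF b(2) b(4) _ n c] unfolding c'_def by simp
        have lb: "lab_b t = newlab (ps_b a0 n \<sigma>) a0 (lab_b s)"
        proof (cases "i = 0")
          case True then show ?thesis using b by (simp add: newlab_def outmark_def)
        next
          case False then show ?thesis using b by (simp add: newlab_lit outmark_def)
        qed
        show ?thesis using sW aA pre tW lb by blast
      qed
    qed
    show "\<exists>t'\<in>Ws_b n c'. rel_b t t' \<and> Z s' \<sigma>' t'"
      if H: "Z s \<sigma> t" "s' \<in> Ws_b n c" "rel_b s s'" "\<sigma>' \<in> As_b n" "ar_b \<sigma> \<sigma>'"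
         "sat ?M (to_nat s') (pr_b a0 \<sigma>')" for s \<sigma> t s' \<sigma>'
    proof -
      from H(1) consider (r) "s = BR" "\<sigma> = B0" "t = BR" | (b) m p i d where "s = BN m p d" "valid n c m p" "\<sigma> = BA i d"
        "i \<le> n" "1 \<le> d" "d \<le> outlen n i m p" "t = BN (outlen n i m p) (outmark n i p) d"
        unfolding Z_def by blast
      then show ?thesis
      proof cases
        case r
        then obtain m p i where e: "s' = BN m p 1" "\<sigma>' = BA i 1" using H(3,5) by auto
        have v: "valid n c m p" "1 \<le> m" "i \<le> n" using H(2,4) e by auto
        have l1: "1 \<le> outlen n i m p"
        proof (cases "i = 0")
          case True then show ?thesis using v n unfolding outlen_def by simp
        next
          case False
          have "(1 = p) = (1 = i)" using H(6) H(2) e False by (simp add: sat_lit)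
          then show ?thesis using first_len[OF False _ v(2)] by simp
        qed
        have "valid n c' (outlen n i m p) (outmark n i p)" using valid_out[OF v(1) v(3) l1 n c] unfolding c'_def .
        then show ?thesis using r e v l1 unfolding Z_def
          by (intro bexI[of _ "BN (outlen n i m p) (outmark n i p) 1"]) auto
      next
        case b
        then have e: "s' = BN m p (Suc d)" "d < m" "\<sigma>' = BA i (Suc d)" using H(3,5) by auto
        have ls: "Suc d \<le> outlen n i m p"
        proof (cases "i = 0")
          case True
          then show ?thesis using e H(4) unfolding outlen_def by simp
        next
          case False
          have "(Suc d = p) = (Suc d = i)" using H(6) H(2) e False by (simp add: sat_lit)
          then show ?thesis using step_len[OF False b(6)] e(2) by simp
        qed
        have "valid n c' (outlen n i m p) (outmark n i p)" using valid_out[OF b(2) b(4) _ n c] b(5,6) unfolding c'_def by simp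
        then show ?thesis using b e ls unfolding Z_def
          by (intro bexI[of _ "BN (outlen n i m p) (outmark n i p) (Suc d)"]) auto
      qed
    qed
    show "\<exists>s' \<sigma>'. s' \<in> Ws_b n c \<and> rel_b s s' \<and> \<sigma>' \<in> As_b n \<and> ar_b \<sigma> \<sigma>' \<and> Z s' \<sigma>' t'"
      if H: "Z s \<sigma> t" "t' \<in> Ws_b n c'" "rel_b t t'" for s \<sigma> t t'
    proof -
      from H(1) consider (r) "s = BR" "\<sigma> = B0" "t = BR" | (b) m p i d where "s = BN m p d" "valid n c m p" "\<sigma> = BA i d"
        "i \<le> n" "1 \<le> d" "d \<le> outlen n i m p" "t = BN (outlen n i m p) (outmark n i p) d"
        unfolding Z_def by blast
      then show ?thesis
      proof cases
        case r
        then obtain L M where e: "t' = BN L M 1" using H(3) by auto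
        have v: "valid n c' L M" "1 \<le> L" using H(2) e by auto
        show ?thesis
        proof (cases "L = Suc n")
          case True
          then have M: "M = c'" using v unfolding valid_def by auto
          have "outlen n c (Suc n) c = Suc n" "outmark n c c = c'" using c unfolding outlen_def outmark_def c'_def by auto
          moreover have "valid n c (Suc n) c" unfolding valid_def by simp
          ultimately show ?thesis using r e True M c unfolding Z_def
            by (intro exI[of _ "BN (Suc n) c 1"] exI[of _ "BA c 1"]) auto
        next
          case False
          then have vv: "1 \<le> L" "L \<le> n" "M \<le> Suc n" using v unfolding valid_def by auto
          then have "valid n c L M" unfolding valid_def by simp
          moreover have "outlen n 0 L M = L" "outmark n 0 M = M" using vv unfolding outlen_def outmark_def by auto
          ultimately show ?thesis using r e vv n unfolding Z_def
            by (intro exI[of _ "BN L M 1"] exI[of _ "BA 0 1"]) auto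
        qed
      next
        case b
        then have e: "t' = BN (outlen n i m p) (outmark n i p) (Suc d)" "d < outlen n i m p" using H(3) by auto
        have le: "outlen n i m p \<le> m" by (rule outlen_le)
        have vm: "m \<le> Suc n" using b(2) unfolding valid_def by auto
        have i0le: "i = 0 \<Longrightarrow> outlen n i m p \<le> n" unfolding outlen_def by simp
        show ?thesis using b e le vm i0le unfolding Z_def
          by (intro exI[of _ "BN m p (Suc d)"] exI[of _ "BA i (Suc d)"]) auto
      qed
    qed
    show "Z BR B0 BR" unfolding Z_def by simp
    show "des_act (mkA (As_b n) ar_b (pr_b a0) (ps_b a0 n) {B0}) (?M, to_nat BR) = to_nat B0"
      using bool_des[of n c] unfolding Sb_def Mb_def .
  qed
  then show ?thesis unfolding Mb_def Sb_def c'_def .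
qed

end


context fixes a0 :: 'a and i0 :: 'i
begin

lemma sat_iter_b:
  assumes "valid n c m p" "1 \<le> d" "d \<le> m"
  shows "sat (Mb n c a0 :: ('a, 'i) kmodel) (to_nat (BN m p d)) ((dia i0 ^^ k) \<phi>) =
     (d + k \<le> m \<and> sat (Mb n c a0 :: ('a, 'i) kmodel) (to_nat (BN m p (d + k))) \<phi>)"
  using assms(2,3)
proof (induction k arbitrary: d)
  case 0 then show ?case by simp
next
  case (Suc k)
  have "sat (Mb n c a0 :: ('a, 'i) kmodel) (to_nat (BN m p d)) ((dia i0 ^^ Suc k) \<phi>) =
     (d < m \<and> sat (Mb n c a0 :: ('a, 'i) kmodel) (to_nat (BN m p (Suc d))) ((dia i0 ^^ k) \<phi>))"
    using assms(1) Suc.prems unfolding Mb_def by (auto simp: sat_mk_dia)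
  also have "\<dots> = (d + Suc k \<le> m \<and> sat (Mb n c a0 :: ('a, 'i) kmodel) (to_nat (BN m p (d + Suc k))) \<phi>)"
    using Suc.IH[of "Suc d"] Suc.prems by auto
  finally show ?case .
qed

definition phi_b :: "nat \<Rightarrow> nat \<Rightarrow> ('a, 'i) form" where
  "phi_b n k = dia i0 (Conj ((dia i0 ^^ n) Top) ((dia i0 ^^ k) (Atom a0)))"

lemma sat_phi_b:
  assumes "1 \<le> c" "c \<le> n"
  shows "sat (Mb n c a0 :: ('a, 'i) kmodel) (to_nat BR) (phi_b n k) = (Suc k = c)"
proof -
  have "sat (Mb n c a0 :: ('a, 'i) kmodel) (to_nat BR) (phi_b n k) =
     (\<exists>m p. valid n c m p \<and> 1 \<le> m \<and> sat (Mb n c a0 :: ('a, 'i) kmodel) (to_nat (BN m p 1)) (Conj ((dia i0 ^^ n) Top) ((dia i0 ^^ k) (Atom a0))))"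
    unfolding phi_b_def Mb_def by (fastforce simp: sat_mk_dia)
  also have "\<dots> = (\<exists>m p. valid n c m p \<and> 1 \<le> m \<and> 1 + n \<le> m \<and> 1 + k \<le> m \<and> 1 + k = p)"
  proof -
    have "sat (Mb n c a0 :: ('a, 'i) kmodel) (to_nat (BN m p 1)) (Conj ((dia i0 ^^ n) Top) ((dia i0 ^^ k) (Atom a0)))
        = (1 + n \<le> m \<and> 1 + k \<le> m \<and> 1 + k = p)" if "valid n c m p" "1 \<le> m" for m p
    proof -
      have "sat (Mb n c a0 :: ('a, 'i) kmodel) (to_nat (BN m p 1)) ((dia i0 ^^ n) Top) = (1 + n \<le> m)"
        using sat_iter_b[OF that(1) _ that(2), of n Top] by simp
      moreover have "sat (Mb n c a0 :: ('a, 'i) kmodel) (to_nat (BN m p 1)) ((dia i0 ^^ k) (Atom a0)) = (1 + k \<le> m \<and> 1 + k = p)"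
        using sat_iter_b[OF that(1) _ that(2), of k "Atom a0"] that by (auto simp: Mb_def)
      ultimately show ?thesis by simp
    qed
    then show ?thesis by blast
  qed
  also have "\<dots> = (Suc k = c)"
    using assms unfolding valid_def by auto
  finally show ?thesis .
qed

lemma bool_part:
  fixes \<Lambda> :: "('a, 'i) form set"
  assumes n: "n \<ge> 1" and NL: "normal_logic \<Lambda>"
  shows "\<exists>(X :: ('a, 'i) pointed set) S f x.
            (\<forall>y \<in> X. wf_pointed y) \<and> clean_amodel \<Lambda> X S \<and> induced_map X S f
            \<and> finite_am S \<and> boolean_am S \<and> \<not> static_am S
            \<and> x \<in> X \<and> periodic_orbit f (mclass X x) \<and> orbit_period f (mclass X x) = n"
proof -
  define xs where "xs c = (Mb n (Suc c) a0 :: ('a, 'i) kmodel, to_nat BR)" for c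
  define S where "S = (Sb a0 n :: ('a, 'i) amodel)"
  have finA: "finite (As_b n)"
  proof -
    have "As_b n \<subseteq> {B0} \<union> (\<lambda>(i, l). BA i l) ` ({..n} \<times> {..Suc n})"
      unfolding As_b_def by (auto simp: image_iff split: if_splits)
    then show ?thesis by (rule finite_subset) simp
  qed
  have props: "finite_am S \<and> boolean_am S \<and> \<not> static_am S"
  proof (intro conjI)
    show "finite_am S" unfolding finite_am_def S_def Sb_def using finA by simp
    show "boolean_am S" unfolding boolean_am_def S_def Sb_def
    proof
      fix \<sigma> assume "\<sigma> \<in> Act (mkA (As_b n) ar_b (pr_b a0) (ps_b a0 n) {B0} :: ('a, 'i) amodel)"
      show "modality_free (pre (mkA (As_b n) ar_b (pr_b a0) (ps_b a0 n) {B0} :: ('a, 'i) amodel) \<sigma>)"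
        by (cases "from_nat \<sigma> :: bact") (auto simp: lit_def)
    qed
    have "to_nat (BA 1 1) \<in> Act S" using n unfolding S_def Sb_def by simp
    moreover have "post S (to_nat (BA 1 1)) \<noteq> Top" unfolding S_def Sb_def by (simp add: lit_def)
    ultimately show "\<not> static_am S" unfolding static_am_def by blast
  qed
  have "\<exists>X f x. (\<forall>y \<in> X. wf_pointed y) \<and> clean_amodel \<Lambda> X S \<and> induced_map X S f
            \<and> x \<in> X \<and> periodic_orbit f (mclass X x) \<and> orbit_period f (mclass X x) = n"
  proof (rule generic[OF n NL])
    show "wf_pointed (xs c)" for c unfolding xs_def Mb_def by (rule wf_mk) simp
    show "wf_amodel S" unfolding wf_amodel_def S_def Sb_def
    proof (intro conjI)
      show "\<forall>\<sigma>\<in>Act (mkA (As_b n) ar_b (pr_b a0) (ps_b a0 n) {B0} :: ('a, 'i) amodel).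
          valid_post (post (mkA (As_b n) ar_b (pr_b a0) (ps_b a0 n) {B0} :: ('a, 'i) amodel) \<sigma>)"
      proof
        fix \<sigma> :: nat
        show "valid_post (post (mkA (As_b n) ar_b (pr_b a0) (ps_b a0 n) {B0} :: ('a, 'i) amodel) \<sigma>)"
          by (cases "from_nat \<sigma> :: bact") (auto simp: lit_def valid_post_def)
      qed
    qed auto
    show "finite (Act S)" unfolding S_def Sb_def using finA by simp
    show "\<exists>!\<sigma>. \<sigma> \<in> Des S \<and> psat (xs c) (pre S \<sigma>)" for c
      by (rule ex1I[of _ "to_nat B0"]) (auto simp: S_def Sb_def psat_def xs_def)
    show "bis (upd (xs c) S) (xs (Suc c mod n))" if "c < n" for c
    proof -
      have "Suc c < n \<or> Suc c = n" using that by auto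
      then have "nx n (Suc c) = Suc (Suc c mod n)" unfolding nx_def by auto
      then show ?thesis using bool_step[OF n, of "Suc c"] that unfolding xs_def S_def by simp
    qed
    show "c = d" if "c < n" "d < n" "mequiv (xs c) (xs d)" for c d
    proof -
      have "psat (xs c) (phi_b n c)" using sat_phi_b[of "Suc c" n c] that by (simp add: psat_def xs_def)
      then have "psat (xs d) (phi_b n c)" using that(3) unfolding mequiv_def by simp
      then show ?thesis using sat_phi_b[of "Suc d" n c] that by (simp add: psat_def xs_def)
    qed
  qed
  then show ?thesis using props by blast
qed

end

theorem proposition12:
  fixes n :: nat and \<Lambda> :: "('a, 'i::finite) form set"
  assumes "n \<ge> 1" and "normal_logic \<Lambda>"
  shows "(\<exists>(X :: ('a, 'i) pointed set) S f x.
            (\<forall>y \<in> X. wf_pointed y) \<and> clean_amodel \<Lambda> X S \<and> induced_map X S f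
            \<and> finite_am S \<and> static_am S \<and> \<not> boolean_am S
            \<and> x \<in> X \<and> periodic_orbit f (mclass X x) \<and> orbit_period f (mclass X x) = n)
       \<and> (\<exists>(X :: ('a, 'i) pointed set) S f x.
            (\<forall>y \<in> X. wf_pointed y) \<and> clean_amodel \<Lambda> X S \<and> induced_map X S f
            \<and> finite_am S \<and> boolean_am S \<and> \<not> static_am S
            \<and> x \<in> X \<and> periodic_orbit f (mclass X x) \<and> orbit_period f (mclass X x) = n)"
  using static_part[OF assms] bool_part[OF assms] by blast


end
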